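(* $d^2\,(d')^2=\delta^2\,(1-d^2)\,(d^2-\lambda^2)$.
   Context: Let $0<\kappa<1$ and $\lambda=\sqrt{1-\kappa^2}$. Let $F(\tfrac16,\tfrac56;\tfrac12;\cdot)$ denote the Gauss hypergeometric function. Define $u$ as a function of $\phi$ near $0$ by $u=\int_0^{\sin\phi}F(\tfrac16,\tfrac56;\tfrac12;\kappa^2t^2)\,\frac{dt}{\sqrt{1-t^2}}$; near the origin (fixing $0$) this inverts to a holomorphic function $u\mapsto\phi(u)$ with $\phi(0)=0$. Let $\psi$ be the holomorphic function near $0$ with $\psi(0)=0$ and $\sin\psi=\kappa\sin\phi$. Set $d=\cos\psi$ and $\delta=\phi'$, as functions of $u$ on a small disc about $0$; primes denote $d/du$. *)

theory Defs
  imports "HOL-Complex_Analysis.Complex_Analysis"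
begin

definition hyp2f1 :: "complex \<Rightarrow> complex \<Rightarrow> complex \<Rightarrow> complex \<Rightarrow> complex" where
  "hyp2f1 a b c z =
     (\<Sum>n. pochhammer a n * pochhammer b n / (pochhammer c n * fact n) * z ^ n)"

definition u_of_phi :: "real \<Rightarrow> complex \<Rightarrow> complex" where
  "u_of_phi \<kappa> \<phi> =
     contour_integral (linepath 0 (sin \<phi>))
       (\<lambda>t. hyp2f1 (1/6) (5/6) (1/2) ((of_real \<kappa>)\<^sup>2 * t\<^sup>2) / csqrt (1 - t\<^sup>2))"

end

theory Submission
  imports Defs
begin

theorem theorem3:
  fixes \<kappa> r :: real and \<phi> \<psi> :: "complex \<Rightarrow> complex"
  assumes "0 < \<kappa>" "\<kappa> < 1" "0 < r"
    and "\<phi> holomorphic_on ball 0 r" "\<phi> 0 = 0"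
    and "\<And>u. u \<in> ball 0 r \<Longrightarrow> u_of_phi \<kappa> (\<phi> u) = u"
    and "\<psi> holomorphic_on ball 0 r" "\<psi> 0 = 0"
    and "\<And>u. u \<in> ball 0 r \<Longrightarrow> sin (\<psi> u) = of_real \<kappa> * sin (\<phi> u)"
    and "u \<in> ball 0 r"
  shows "let lam = complex_of_real (sqrt (1 - \<kappa>\<^sup>2));
             d = (\<lambda>v. cos (\<psi> v));
             \<delta> = deriv \<phi>
         in (d u)\<^sup>2 * (deriv d u)\<^sup>2 = (\<delta> u)\<^sup>2 * (1 - (d u)\<^sup>2) * ((d u)\<^sup>2 - lam\<^sup>2)"
proof -
  have ob: "open (ball (0::complex) r)" by simp
  have dphi: "(\<phi> has_field_derivative deriv \<phi> u) (at u)"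
    using assms(4,10) ob holomorphic_derivI by blast
  have dpsi: "(\<psi> has_field_derivative deriv \<psi> u) (at u)"
    using assms(7,10) ob holomorphic_derivI by blast
  have d1: "((\<lambda>v. sin (\<psi> v)) has_field_derivative cos (\<psi> u) * deriv \<psi> u) (at u)"
    using dpsi by (auto intro!: derivative_eq_intros)
  have d2: "((\<lambda>v. of_real \<kappa> * sin (\<phi> v)) has_field_derivative of_real \<kappa> * (cos (\<phi> u) * deriv \<phi> u)) (at u)"
    using dphi by (auto intro!: derivative_eq_intros)
  have d1': "((\<lambda>v. of_real \<kappa> * sin (\<phi> v)) has_field_derivative cos (\<psi> u) * deriv \<psi> u) (at u)"
    by (rule has_field_derivative_transform_within_open[OF d1 ob assms(10)]) (simp add: assms(9))
  have key: "cos (\<psi> u) * deriv \<psi> u = of_real \<kappa> * (cos (\<phi> u) * deriv \<phi> u)"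
    using DERIV_unique[OF d1' d2] .
  have dd: "((\<lambda>v. cos (\<psi> v)) has_field_derivative - sin (\<psi> u) * deriv \<psi> u) (at u)"
    using dpsi by (auto intro!: derivative_eq_intros)
  hence ddu: "deriv (\<lambda>v. cos (\<psi> v)) u = - sin (\<psi> u) * deriv \<psi> u"
    using DERIV_imp_deriv by blast
  have lam: "(complex_of_real (sqrt (1 - \<kappa>\<^sup>2)))\<^sup>2 = 1 - (of_real \<kappa>)\<^sup>2"
  proof -
    have "\<kappa>\<^sup>2 < 1" using assms(1,2) by (simp add: power_less_one_iff abs_less_iff)
    hence "(sqrt (1 - \<kappa>\<^sup>2))\<^sup>2 = 1 - \<kappa>\<^sup>2" by simp
    hence "complex_of_real ((sqrt (1 - \<kappa>\<^sup>2))\<^sup>2) = complex_of_real (1 - \<kappa>\<^sup>2)" by simp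
    thus ?thesis by simp
  qed
  have s: "sin (\<psi> u) = of_real \<kappa> * sin (\<phi> u)" using assms(9,10) .
  have p1: "(sin (\<psi> u))\<^sup>2 + (cos (\<psi> u))\<^sup>2 = 1" by (rule sin_cos_squared_add)
  have p2: "(sin (\<phi> u))\<^sup>2 + (cos (\<phi> u))\<^sup>2 = 1" by (rule sin_cos_squared_add)
  have "(cos (\<psi> u))\<^sup>2 * (- sin (\<psi> u) * deriv \<psi> u)\<^sup>2
      = (sin (\<psi> u))\<^sup>2 * (cos (\<psi> u) * deriv \<psi> u)\<^sup>2" by (simp add: power_mult_distrib)
  also have "\<dots> = (sin (\<psi> u))\<^sup>2 * (of_real \<kappa>)\<^sup>2 * (cos (\<phi> u))\<^sup>2 * (deriv \<phi> u)\<^sup>2"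
    by (simp add: key power_mult_distrib)
  also have "\<dots> = (deriv \<phi> u)\<^sup>2 * (1 - (cos (\<psi> u))\<^sup>2) * ((cos (\<psi> u))\<^sup>2 - (1 - (of_real \<kappa>)\<^sup>2))"
  proof -
    have a: "1 - (cos (\<psi> u))\<^sup>2 = (sin (\<psi> u))\<^sup>2" using p1 by (simp add: algebra_simps)
    have b: "(cos (\<psi> u))\<^sup>2 - (1 - (of_real \<kappa>)\<^sup>2) = (of_real \<kappa>)\<^sup>2 * (cos (\<phi> u))\<^sup>2"
    proof -
      have "(cos (\<psi> u))\<^sup>2 = 1 - (of_real \<kappa>)\<^sup>2 * (sin (\<phi> u))\<^sup>2"
        using p1 s by (simp add: power_mult_distrib algebra_simps)
      moreover have "(sin (\<phi> u))\<^sup>2 = 1 - (cos (\<phi> u))\<^sup>2" using p2 by (simp add: algebra_simps)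
      ultimately show ?thesis by (simp add: algebra_simps)
    qed
    show ?thesis by (simp only: a b) (simp add: algebra_simps)
  qed
  finally show ?thesis unfolding Let_def ddu lam .
qed

end
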